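(* If $\mu_0<\mu<1$ and $v\in\mathcal{K}\setminus\mathcal{Y}_\mu$, then $C_v^+\cap\mathcal{K}\subset\mathcal{K}\setminus\mathcal{Y}_\mu$.
   Context: $\mathcal{K}\subset\mathbb{R}^q$ is an open, bounded, convex set with $0\in\mathcal{K}$. Let $g:\mathbb{S}^{q-1}\to(0,\infty)$ be the Lipschitz function such that $\nu\mapsto g(\nu)\nu$ parametrizes $\partial\mathcal{K}$, and $m_2=\sup g$. Define $G:\overline{B_1(0)}\to\overline{\mathcal{K}}$ by $G(x)=g(x/|x|)x$ for $x\ne0$, $G(0)=0$, and for $0<\mu<1$ let $\mathcal{Y}_\mu=G(B_\mu(0))$ (open convex sets increasing to $\mathcal{K}$). Fix $r_0>0$ and $0<\mu_0<1$ with $\overline{B_{r_0}(0)}\subset\mathcal{Y}_{\mu_0}$. Cones: for $v\in\mathcal{K}\setminus\overline{B_{r_0}(0)}$, $C_v^-$ is the closed (solid) half-cone with vertex $v$, axis the ray from $v$ through $0$, and half-aperture $\alpha=\alpha(v)\in(0,\pi/2)$ given by $\sin\alpha=r_0/|v|$; $C_v^+=\{v+\xi:\xi\in\mathbb{R}^q,\ v-\xi\in C_v^-\}$ is its reflection through $v$. (Note that $v\in\mathcal{K}\setminus\mathcal{Y}_\mu$ with $\mu>\mu_0$ implies $v\notin\overline{B_{r_0}(0)}$, so $C_v^+$ is defined.) *)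

theory Defs
  imports "HOL-Analysis.Analysis"
begin

definition radG :: "('a::real_normed_vector \<Rightarrow> real) \<Rightarrow> 'a \<Rightarrow> 'a" where
  "radG g x = (if x = 0 then 0 else g (x /\<^sub>R norm x) *\<^sub>R x)"

definition Ymu :: "('a::real_normed_vector \<Rightarrow> real) \<Rightarrow> real \<Rightarrow> 'a set" where
  "Ymu g \<mu> = radG g ` ball 0 \<mu>"

definition cone_alpha :: "real \<Rightarrow> 'a::real_normed_vector \<Rightarrow> real" where
  "cone_alpha r0 v = arcsin (r0 / norm v)"

text \<open>C_v^-: closed solid half-cone with vertex v, axis the ray from v through 0,
  half-aperture alpha(v): points x with angle between x - v and -v at most alpha.\<close>
definition cone_minus :: "real \<Rightarrow> 'a::real_inner \<Rightarrow> 'a set" where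
  "cone_minus r0 v = {x. norm (x - v) * norm v * cos (cone_alpha r0 v) \<le> (x - v) \<bullet> (- v)}"

definition cone_plus :: "real \<Rightarrow> 'a::real_inner \<Rightarrow> 'a set" where
  "cone_plus r0 v = {v + \<xi> | \<xi>. v - \<xi> \<in> cone_minus r0 v}"

end

theory Submission
  imports Defs
begin

lemma ray_in:
  fixes K :: "'a::euclidean_space set"
  assumes K: "open K" "convex K" "0 \<in> K"
    and fr: "g \<nu> *\<^sub>R \<nu> \<in> frontier K" and gp: "g \<nu> > 0"
    and n: "norm \<nu> = 1" and t: "0 \<le> t" "t < g \<nu>"
  shows "t *\<^sub>R \<nu> \<in> K"
proof (cases "t = 0")
  case True then show ?thesis using K by simp
next
  case False
  have cl: "g \<nu> *\<^sub>R \<nu> \<in> closure K" using fr by (simp add: frontier_def)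
  have "open_segment 0 (g \<nu> *\<^sub>R \<nu>) \<subseteq> interior K"
    by (rule in_interior_closure_convex_segment) (use K cl interior_open in auto)
  moreover have "t *\<^sub>R \<nu> \<in> open_segment 0 (g \<nu> *\<^sub>R \<nu>)"
  proof -
    have ne: "0 \<noteq> g \<nu> *\<^sub>R \<nu>" using gp n by auto
    have "t *\<^sub>R \<nu> = (1 - t / g \<nu>) *\<^sub>R 0 + (t / g \<nu>) *\<^sub>R (g \<nu> *\<^sub>R \<nu>)"
      using gp by simp
    moreover have "0 < t / g \<nu>" "t / g \<nu> < 1" using gp t False by auto
    ultimately show ?thesis using ne by (auto simp: in_segment)
  qed
  ultimately show ?thesis using K interior_open by blast
qed

lemma ray_out:
  fixes K :: "'a::euclidean_space set"
  assumes K: "open K" "convex K" "0 \<in> K"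
    and fr: "g \<nu> *\<^sub>R \<nu> \<in> frontier K" and gp: "g \<nu> > 0"
    and n: "norm \<nu> = 1" and t: "g \<nu> \<le> t" and tK: "t *\<^sub>R \<nu> \<in> K"
  shows False
proof -
  have nK: "g \<nu> *\<^sub>R \<nu> \<notin> K" using fr K by (simp add: frontier_def interior_open)
  show False
  proof (cases "t = g \<nu>")
    case True then show ?thesis using nK tK by simp
  next
    case False
    then have tg: "g \<nu> < t" using t by simp
    have "open_segment 0 (t *\<^sub>R \<nu>) \<subseteq> interior K"
      by (rule in_interior_closure_convex_segment) (use K tK closure_subset interior_open in auto)
    moreover have "g \<nu> *\<^sub>R \<nu> \<in> open_segment 0 (t *\<^sub>R \<nu>)"
    proof -
      have ne: "0 \<noteq> t *\<^sub>R \<nu>" using gp tg n by auto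
      have "g \<nu> *\<^sub>R \<nu> = (1 - g \<nu> / t) *\<^sub>R 0 + (g \<nu> / t) *\<^sub>R (t *\<^sub>R \<nu>)"
        using gp tg by simp
      moreover have "0 < g \<nu> / t" "g \<nu> / t < 1" using gp tg by auto
      ultimately show ?thesis using ne by (auto simp: in_segment)
    qed
    ultimately show ?thesis using K nK interior_open by blast
  qed
qed

lemma Ymu_eq:
  fixes K :: "'a::euclidean_space set"
  assumes K: "open K" "convex K" "0 \<in> K"
    and gp: "\<forall>\<nu>\<in>sphere 0 1. g \<nu> > 0"
    and fr: "frontier K = (\<lambda>\<nu>. g \<nu> *\<^sub>R \<nu>) ` sphere 0 1"
    and mu: "\<mu> > 0"
  shows "Ymu g \<mu> = (\<lambda>y. \<mu> *\<^sub>R y) ` K"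
proof
  show "Ymu g \<mu> \<subseteq> (\<lambda>y. \<mu> *\<^sub>R y) ` K"
  proof
    fix z assume "z \<in> Ymu g \<mu>"
    then obtain x where x: "x \<in> ball 0 \<mu>" "z = radG g x" by (auto simp: Ymu_def)
    show "z \<in> (\<lambda>y. \<mu> *\<^sub>R y) ` K"
    proof (cases "x = 0")
      case True then show ?thesis using x K by (auto simp: radG_def intro!: image_eqI[where x=0])
    next
      case False
      define \<nu> where "\<nu> = x /\<^sub>R norm x"
      have n: "norm \<nu> = 1" using False by (simp add: \<nu>_def)
      have g0: "g \<nu> > 0" using gp n by auto
      have frv: "g \<nu> *\<^sub>R \<nu> \<in> frontier K" using fr n by auto
      have xe: "x = norm x *\<^sub>R \<nu>" using False by (simp add: \<nu>_def)
      have nx: "norm x < \<mu>" using x by simp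
      have "(g \<nu> * norm x / \<mu>) *\<^sub>R \<nu> \<in> K"
        apply (rule ray_in[where g=g and \<nu>=\<nu>, OF K frv g0 n])
        using g0 mu nx apply simp
        using g0 mu nx by (simp add: divide_less_eq mult_strict_left_mono)
      moreover have "z = \<mu> *\<^sub>R ((g \<nu> * norm x / \<mu>) *\<^sub>R \<nu>)"
      proof -
        have "z = g \<nu> *\<^sub>R x" using x False by (simp add: radG_def \<nu>_def[symmetric])
        also have "\<dots> = g \<nu> *\<^sub>R (norm x *\<^sub>R \<nu>)" using xe by metis
        finally show ?thesis using mu by simp
      qed
      ultimately show ?thesis by blast
    qed
  qed
next
  show "(\<lambda>y. \<mu> *\<^sub>R y) ` K \<subseteq> Ymu g \<mu>"
  proof
    fix z assume "z \<in> (\<lambda>y. \<mu> *\<^sub>R y) ` K"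
    then obtain y where y: "y \<in> K" "z = \<mu> *\<^sub>R y" by auto
    show "z \<in> Ymu g \<mu>"
    proof (cases "y = 0")
      case True then show ?thesis using y mu
        by (auto simp: Ymu_def radG_def intro!: image_eqI[where x=0])
    next
      case False
      define \<nu> where "\<nu> = y /\<^sub>R norm y"
      have n: "norm \<nu> = 1" using False by (simp add: \<nu>_def)
      have g0: "g \<nu> > 0" using gp n by auto
      have frv: "g \<nu> *\<^sub>R \<nu> \<in> frontier K" using fr n by auto
      have ye: "y = norm y *\<^sub>R \<nu>" using False by (simp add: \<nu>_def)
      have lt: "norm y < g \<nu>"
      proof (rule ccontr)
        assume "\<not> norm y < g \<nu>"
        then show False using ray_out[where g=g and \<nu>=\<nu>, OF K frv g0 n, of "norm y"] y ye by simp
      qed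
      define x where "x = (\<mu> * norm y / g \<nu>) *\<^sub>R \<nu>"
      have c: "\<mu> * norm y / g \<nu> > 0" using mu False g0 by simp
      have nx: "norm x = \<mu> * norm y / g \<nu>" using c n mu g0 by (simp add: x_def)
      have "norm x < \<mu>" unfolding nx using lt g0 mu by (simp add: divide_less_eq)
      moreover have "x \<noteq> 0" using nx c by auto
      moreover have "x /\<^sub>R norm x = \<nu>" using c n mu g0 False by (simp add: x_def nx)
      moreover have "radG g x = z"
      proof -
        have "radG g x = g \<nu> *\<^sub>R x"
          using \<open>x \<noteq> 0\<close> \<open>x /\<^sub>R norm x = \<nu>\<close> by (simp add: radG_def)
        also have "\<dots> = \<mu> *\<^sub>R (norm y *\<^sub>R \<nu>)" using g0 by (simp add: x_def)
        finally show ?thesis using y ye by metis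
      qed
      ultimately show ?thesis by (auto simp: Ymu_def)
    qed
  qed
qed

theorem proposition2p3:
  fixes K :: "'a::euclidean_space set" and g :: "'a \<Rightarrow> real"
    and r0 \<mu>0 \<mu> :: real and v :: 'a
  assumes "open K" and "bounded K" and "convex K" and "0 \<in> K"
    and "\<exists>L. L-lipschitz_on (sphere 0 1) g"
    and "\<forall>\<nu>\<in>sphere 0 1. g \<nu> > 0"
    and "frontier K = (\<lambda>\<nu>. g \<nu> *\<^sub>R \<nu>) ` sphere 0 1"
    and "r0 > 0" and "0 < \<mu>0" and "\<mu>0 < 1"
    and "cball 0 r0 \<subseteq> Ymu g \<mu>0"
    and "\<mu>0 < \<mu>" and "\<mu> < 1"
    and "v \<in> K - Ymu g \<mu>"
  shows "cone_plus r0 v \<inter> K \<subseteq> K - Ymu g \<mu>"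
proof
  fix x assume xin: "x \<in> cone_plus r0 v \<inter> K"
  have cvx: "convex (Ymu g \<mu>)"
    using Ymu_eq[of K g \<mu>] assms convex_scaling by fastforce
  have "Ymu g \<mu>0 \<subseteq> Ymu g \<mu>" unfolding Ymu_def
    by (rule image_mono) (use assms in auto)
  then have cb: "cball 0 r0 \<subseteq> Ymu g \<mu>" using assms by blast
  have vn: "v \<notin> Ymu g \<mu>" using assms by blast
  have nv: "norm v > r0"
  proof (rule ccontr)
    assume "\<not> r0 < norm v" then have "v \<in> cball 0 r0" by simp
    then show False using cb vn by blast
  qed
  show "x \<in> K - Ymu g \<mu>"
  proof (rule ccontr)
    assume "x \<notin> K - Ymu g \<mu>"
    then have xY: "x \<in> Ymu g \<mu>" using xin by blast
    obtain \<xi> where xe: "x = v + \<xi>" and cm: "v - \<xi> \<in> cone_minus r0 v"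
      using xin by (auto simp: cone_plus_def)
    define ca where "ca = cos (cone_alpha r0 v)"
    have r1a: "r0 / norm v \<le> 1" using nv \<open>r0 > 0\<close> by (simp add: divide_le_eq)
    have "0 \<le> r0 / norm v" using \<open>r0 > 0\<close> by simp
    then have r1b: "-1 \<le> r0 / norm v" by linarith
    note r1 = r1a r1b
    have ca: "ca = sqrt (1 - (r0 / norm v)^2)"
      unfolding ca_def cone_alpha_def using cos_arcsin[OF r1(2) r1(1)] .
    have le1: "(r0 / norm v)^2 \<le> 1" using r1 \<open>0 \<le> r0 / norm v\<close> by (simp add: power_le_one)
    have ca2: "ca^2 = 1 - (r0 / norm v)^2" using ca le1 by simp
    have ca0: "ca \<ge> 0" using ca le1 by simp

    have hyp: "norm \<xi> * norm v * ca \<le> \<xi> \<bullet> v"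
      using cm by (simp add: cone_minus_def ca_def)
    have "v \<noteq> 0" using nv \<open>r0 > 0\<close> by auto
    have \<xi>0: "\<xi> \<noteq> 0" using xe xY vn by auto
    have d0: "\<xi> \<bullet> v \<ge> 0" using hyp ca0
      by (meson mult_nonneg_nonneg norm_ge_zero order_trans)
    define s where "s = (\<xi> \<bullet> v) / (norm \<xi>)^2"
    have s0: "s \<ge> 0" using d0 by (simp add: s_def)
    define p where "p = v - s *\<^sub>R \<xi>"
    have nx2: "(norm \<xi>)^2 > 0" using \<xi>0 by simp
    have p2: "(norm p)^2 = (norm v)^2 - (\<xi> \<bullet> v)^2 / (norm \<xi>)^2"
    proof -
      have "(norm p)^2 = (norm v)^2 - 2 * s * (\<xi> \<bullet> v) + s^2 * (norm \<xi>)^2"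
        unfolding p_def power2_norm_eq_inner
        by (simp add: inner_diff_left inner_diff_right inner_commute power2_eq_square algebra_simps)
      moreover have "s^2 * (norm \<xi>)^2 = (\<xi> \<bullet> v)^2 / (norm \<xi>)^2"
        using nx2 unfolding s_def by (simp add: power_divide power2_eq_square)
      moreover have "2 * s * (\<xi> \<bullet> v) = 2 * ((\<xi> \<bullet> v)^2 / (norm \<xi>)^2)"
        unfolding s_def by (simp add: power2_eq_square)
      ultimately show ?thesis by simp
    qed
    have sq: "(norm \<xi> * norm v * ca)^2 \<le> (\<xi> \<bullet> v)^2"
      using hyp ca0 by (intro power_mono) auto
    have nv2: "(norm v)^2 > 0" using \<open>v \<noteq> 0\<close> by simp
    have "(norm v)^2 * (1 - (r0 / norm v)^2) = (norm v)^2 - r0^2"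
      using nv2 by (simp add: power_divide right_diff_distrib)
    then have "(norm \<xi> * norm v * ca)^2 = (norm \<xi>)^2 * ((norm v)^2 - r0^2)"
      unfolding power_mult_distrib ca2 by simp
    then have "(norm \<xi>)^2 * ((norm v)^2 - r0^2) \<le> (\<xi> \<bullet> v)^2" using sq by simp
    then have "(norm v)^2 - r0^2 \<le> (\<xi> \<bullet> v)^2 / (norm \<xi>)^2"
      using nx2 by (simp add: pos_le_divide_eq mult.commute)
    then have "(norm p)^2 \<le> r0^2" using p2 by simp
    then have "norm p \<le> r0" by (rule power2_le_imp_le) (use \<open>r0 > 0\<close> in linarith)
    then have pY: "p \<in> Ymu g \<mu>" using cb by auto
    have "(s / (1 + s)) *\<^sub>R x + (1 / (1 + s)) *\<^sub>R p \<in> Ymu g \<mu>"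
      apply (rule convexD[OF cvx xY pY])
      using s0 by (auto simp: add_divide_distrib[symmetric])
    moreover have "(s / (1 + s)) *\<^sub>R x + (1 / (1 + s)) *\<^sub>R p = v"
    proof -
      have "(s / (1 + s)) *\<^sub>R x + (1 / (1 + s)) *\<^sub>R p
          = (s / (1 + s) + 1 / (1 + s)) *\<^sub>R v + (s / (1 + s) - s / (1 + s)) *\<^sub>R \<xi>"
        unfolding xe p_def by (simp add: scaleR_add_right scaleR_diff_right scaleR_add_left scaleR_diff_left)
      also have "s / (1 + s) + 1 / (1 + s) = 1" using s0 by (simp add: add_divide_distrib[symmetric])
      finally show ?thesis by simp
    qed
    ultimately show False using vn by simp
  qed
qed

end
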